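(* Suppose Assumptions A(b)–A(c) hold (and the ADMM iterates are well defined). Let $\{(x^r,y^r)\}$ be generated by the ADMM algorithm. Then there exists a constant $\sigma>0$, independent of $y^r$, such that $$\|\tilde\nabla_x L(x^r;y^r)\|\le\sigma\|x^{r+1}-x^r\|\qquad\text{for all } r\ge1.$$
   Context: Let $x=(x_1^T,\dots,x_K^T)^T\in\mathbb{R}^n$ be partitioned into blocks, $E=(E_1,\dots,E_K)\in\mathbb{R}^{m\times n}$ partitioned accordingly, $q\in\mathbb{R}^m$, $X=\prod_kX_k$. Objective $f(x)=\sum_kf_k(x_k)$ with (A(b)) $f_k(x_k)=g_k(A_kx_k)+h_k(x_k)$, $g_k,h_k$ convex and continuous on their domains, $A_k$ given matrices; (A(c)) each $g_k$ is strictly convex and continuously differentiable on the interior of its domain and there is $L>0$ with $\|A_k^T\nabla g_k(A_kx_k)-A_k^T\nabla g_k(A_kx_k')\|\le L\|x_k-x_k'\|$ for all $x_k,x_k'\in X_k$. The constraint $x_k\in X_k$ is absorbed into $h_k$ via its indicator function; $h(x)=\sum_kh_k(x_k)$, $g(Ax)=\sum_kg_k(A_kx_k)$. For $\rho>0$, $L(x;y)=f(x)+\langle y,q-Ex\rangle+\frac{\rho}{2}\|q-Ex\|^2$. $\mathrm{prox}_h(v)=\arg\min_u h(u)+\frac12\|v-u\|^2$; the proximal gradient is $\tilde\nabla_xL(x;y)=x-\mathrm{prox}_h\big(x-A^T\nabla g(Ax)+E^Ty-\rho E^T(Ex-q)\big)$, where $A^T\nabla g(Ax)$ has blocks $A_k^T\nabla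 g_k(A_kx_k)$. ADMM with dual stepsize $\alpha>0$: from $(x^0,y^0)$, for $r=0,1,\dots$, compute for $k=1,\dots,K$ in order $x_k^{r+1}=\arg\min_{x_k\in X_k}L(x_1^{r+1},\dots,x_{k-1}^{r+1},x_k,x_{k+1}^r,\dots,x_K^r;y^r)$, then $y^{r+1}=y^r+\alpha(q-Ex^{r+1})$. *)

theory Defs
  imports "HOL-Analysis.Analysis"
begin

text \<open>The variable x lives in real^'n; coordinate i belongs to
  block blk i (blocks are numbered 0..K-1).  Similarly the range space of the A_k is real^'p with
  row blocks given by blkp.\<close>

definition bproj :: "('n \<Rightarrow> nat) \<Rightarrow> nat \<Rightarrow> real^'n \<Rightarrow> real^'n" where
  "bproj blk k x = (\<chi> i. if blk i = k then x $ i else 0)"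

text \<open>The point (a_1,...,a_{k-1}, u_k, b_{k+1},...,b_K) of the Gauss-Seidel sweep.\<close>
definition gs_point :: "('n \<Rightarrow> nat) \<Rightarrow> nat \<Rightarrow> real^'n \<Rightarrow> real^'n \<Rightarrow> real^'n \<Rightarrow> real^'n" where
  "gs_point blk k a u b = (\<chi> i. if blk i < k then a $ i else if blk i = k then u $ i else b $ i)"

text \<open>Diagonal blocks of A: A_k x_k and A_k^T w_k.\<close>
definition Ablk :: "('n \<Rightarrow> nat) \<Rightarrow> ('p \<Rightarrow> nat) \<Rightarrow> real^'n^'p \<Rightarrow> nat \<Rightarrow> real^'n \<Rightarrow> real^'p" where
  "Ablk blk blkp A k x = bproj blkp k (A *v bproj blk k x)"

definition AblkT :: "('n \<Rightarrow> nat) \<Rightarrow> ('p \<Rightarrow> nat) \<Rightarrow> real^'n^'p \<Rightarrow> nat \<Rightarrow> real^'p \<Rightarrow> real^'n" where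
  "AblkT blk blkp A k w = bproj blk k (transpose A *v bproj blkp k w)"

definition strictly_convex_on :: "'a::real_vector set \<Rightarrow> ('a \<Rightarrow> real) \<Rightarrow> bool" where
  "strictly_convex_on S f \<longleftrightarrow>
     (\<forall>x\<in>S. \<forall>y\<in>S. \<forall>t. x \<noteq> y \<and> 0 < t \<and> t < 1 \<longrightarrow>
        f ((1 - t) *\<^sub>R x + t *\<^sub>R y) < (1 - t) * f x + t * f y)"

definition prox :: "'a::real_normed_vector set \<Rightarrow> ('a \<Rightarrow> real) \<Rightarrow> 'a \<Rightarrow> 'a" where
  "prox D h v = (THE u. u \<in> D \<and>
      (\<forall>w\<in>D. h u + (norm (v - u))\<^sup>2 / 2 \<le> h w + (norm (v - w))\<^sup>2 / 2))"

text \<open>Effective domain of h(x) = sum_k h_k(x_k) (constraints X_k absorbed) and h itself.\<close>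
definition hdom :: "('n \<Rightarrow> nat) \<Rightarrow> nat \<Rightarrow> (nat \<Rightarrow> (real^'n) set) \<Rightarrow> (nat \<Rightarrow> (real^'n) set)
                    \<Rightarrow> (real^'n) set" where
  "hdom blk K Dh X = {x. \<forall>k<K. bproj blk k x \<in> Dh k \<inter> X k}"

definition hsum :: "('n \<Rightarrow> nat) \<Rightarrow> nat \<Rightarrow> (nat \<Rightarrow> real^'n \<Rightarrow> real) \<Rightarrow> real^'n \<Rightarrow> real" where
  "hsum blk K h x = (\<Sum>k<K. h k (bproj blk k x))"

text \<open>A^T grad g(Ax): block k equals A_k^T grad g_k(A_k x_k).\<close>
definition gradg :: "('n \<Rightarrow> nat) \<Rightarrow> ('p \<Rightarrow> nat) \<Rightarrow> nat \<Rightarrow> real^'n^'p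
                      \<Rightarrow> (nat \<Rightarrow> real^'p \<Rightarrow> real^'p) \<Rightarrow> real^'n \<Rightarrow> real^'n" where
  "gradg blk blkp K A dg x = (\<Sum>k<K. AblkT blk blkp A k (dg k (Ablk blk blkp A k x)))"

definition aug_lag :: "('n \<Rightarrow> nat) \<Rightarrow> ('p \<Rightarrow> nat) \<Rightarrow> nat \<Rightarrow> real^'n^'p
      \<Rightarrow> (nat \<Rightarrow> real^'p \<Rightarrow> real) \<Rightarrow> (nat \<Rightarrow> real^'n \<Rightarrow> real)
      \<Rightarrow> real^'n^'m \<Rightarrow> real^'m \<Rightarrow> real \<Rightarrow> real^'n \<Rightarrow> real^'m \<Rightarrow> real" where
  "aug_lag blk blkp K A g h E q \<rho> x y =
     (\<Sum>k<K. g k (Ablk blk blkp A k x) + h k (bproj blk k x))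
     + y \<bullet> (q - E *v x) + \<rho> / 2 * (norm (q - E *v x))\<^sup>2"

definition prox_grad :: "('n \<Rightarrow> nat) \<Rightarrow> ('p \<Rightarrow> nat) \<Rightarrow> nat \<Rightarrow> real^'n^'p
      \<Rightarrow> (nat \<Rightarrow> real^'p \<Rightarrow> real^'p) \<Rightarrow> (nat \<Rightarrow> real^'n \<Rightarrow> real)
      \<Rightarrow> (nat \<Rightarrow> (real^'n) set) \<Rightarrow> (nat \<Rightarrow> (real^'n) set)
      \<Rightarrow> real^'n^'m \<Rightarrow> real^'m \<Rightarrow> real \<Rightarrow> real^'n \<Rightarrow> real^'m \<Rightarrow> real^'n" where
  "prox_grad blk blkp K A dg h Dh X E q \<rho> x y =
     x - prox (hdom blk K Dh X) (hsum blk K h)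
           (x - gradg blk blkp K A dg x + transpose E *v y - \<rho> *\<^sub>R (transpose E *v (E *v x - q)))"

definition admm_seq where
  "admm_seq blk blkp K A g h Dh X E q \<rho> \<alpha> (x :: nat \<Rightarrow> real^'n) (y :: nat \<Rightarrow> real^'m) \<longleftrightarrow>
     (\<forall>r. \<forall>k<K.
        bproj blk k (x (Suc r)) \<in> Dh k \<inter> X k \<and>
        (\<forall>u. bproj blk k u \<in> Dh k \<inter> X k \<longrightarrow>
           aug_lag blk blkp K A g h E q \<rho> (gs_point blk k (x (Suc r)) (x (Suc r)) (x r)) (y r)
           \<le> aug_lag blk blkp K A g h E q \<rho> (gs_point blk k (x (Suc r)) u (x r)) (y r))) \<and>
     (\<forall>r. y (Suc r) = y r + \<alpha> *\<^sub>R (q - E *v x (Suc r)))"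

end

theory Submission
  imports Defs
begin


lemma bproj_add: "bproj blk k (a + b) = bproj blk k a + bproj blk k b"
  by (simp add: bproj_def vec_eq_iff)
lemma bproj_diff: "bproj blk k (a - b) = bproj blk k a - bproj blk k b"
  by (simp add: bproj_def vec_eq_iff)
lemma bproj_scaleR: "bproj blk k (c *\<^sub>R a) = c *\<^sub>R bproj blk k a"
  by (simp add: bproj_def vec_eq_iff)
lemma bproj_bproj: "bproj blk j (bproj blk k a) = (if j = k then bproj blk k a else 0)"
  by (simp add: bproj_def vec_eq_iff)
lemma bproj_zero[simp]: "bproj blk k 0 = 0"
  by (simp add: bproj_def vec_eq_iff)

lemma sum_bproj:
  assumes "\<forall>i. blk i < K"
  shows "(\<Sum>k<K. bproj blk k x) = x"
proof -
  have "\<And>i. (\<Sum>k<K. (if blk i = k then x $ i else 0)) = x $ i"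
    using assms by (simp add: sum.delta)
  then show ?thesis by (simp add: bproj_def vec_eq_iff sum_component)
qed

lemma inner_bproj: "inner (bproj blk k (a::real^'n)) b = inner a (bproj blk k b)"
  unfolding bproj_def inner_vec_def by (auto intro!: sum.cong)

lemma norm_bproj_le: "norm (bproj blk k (a::real^'n)) \<le> norm a"
  by (rule norm_le_componentwise_cart) (simp add: bproj_def)

lemma inner_transpose: "inner (transpose E *v (a::real^'m)) (d::real^'n) = inner a (E *v d)"
  by (simp add: dot_lmul_matrix)

lemma Ablk_add: "Ablk blk blkp A k (a + b) = Ablk blk blkp A k a + Ablk blk blkp A k b"
  by (simp add: Ablk_def bproj_add matrix_vector_right_distrib)
lemma Ablk_scaleR: "Ablk blk blkp A k (c *\<^sub>R a) = c *\<^sub>R Ablk blk blkp A k (a::real^'n)"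
  by (simp add: Ablk_def bproj_scaleR matrix_vector_mult_scaleR)

lemma inner_Ablk: "inner (w::real^'p) (Ablk blk blkp A k (d::real^'n)) = inner (AblkT blk blkp A k w) d"
  unfolding Ablk_def AblkT_def
  by (metis inner_bproj inner_commute inner_transpose)

lemma bproj_gs: "bproj blk k (gs_point blk k a u b) = bproj blk k u"
  by (simp add: bproj_def gs_point_def vec_eq_iff)

lemma gs_lin: "gs_point blk k a u b = gs_point blk k a a b + bproj blk k (u - a)"
  by (simp add: bproj_def gs_point_def vec_eq_iff)

lemma norm_gs_le: "norm (gs_point blk k a a b - b) \<le> norm (a - (b::real^'n))"
  by (rule norm_le_componentwise_cart) (simp add: gs_point_def)

lemma Ablk_bproj: "Ablk blk blkp A k (bproj blk k z) = Ablk blk blkp A k z"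
  by (simp add: Ablk_def bproj_bproj)

lemma small_t:
  fixes a b :: real
  assumes "\<And>t. 0 < t \<Longrightarrow> t \<le> 1 \<Longrightarrow> 0 \<le> a + t * b"
  shows "0 \<le> a"
proof (rule ccontr)
  assume na: "\<not> 0 \<le> a"
  show False
  proof (cases "b \<le> 0")
    case True then show ?thesis using assms[of 1] na by simp
  next
    case False
    define t where "t = min 1 (-a / (2*b))"
    have t0: "0 < t" "t \<le> 1" using False na by (auto simp: t_def divide_neg_pos)
    have "t * b \<le> -a/2" using False unfolding t_def
      by (smt (verit, best) field_sum_of_halves le_divide_eq min.cobounded2 mult.commute nonzero_mult_div_cancel_right times_divide_eq_right)
    then show ?thesis using assms[OF t0] na by linarith
  qed
qed



lemma sq_expand: "(norm ((a::'a::real_inner) - t *\<^sub>R b))\<^sup>2 = (norm a)\<^sup>2 - 2 * t * inner a b + t\<^sup>2 * (norm b)\<^sup>2"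
  by (simp only: power2_norm_eq_inner) (simp add: inner_diff_left inner_diff_right inner_commute power2_eq_square algebra_simps)

lemma par_id: "(norm ((1/2) *\<^sub>R (a::'a::real_inner) + (1/2) *\<^sub>R b))\<^sup>2 = (norm a)\<^sup>2/2 + (norm b)\<^sup>2/2 - (norm (b - a))\<^sup>2/4"
proof -
  have "(norm ((1/2) *\<^sub>R a + (1/2) *\<^sub>R b))\<^sup>2 = (inner a a + 2 * inner a b + inner b b)/4"
    by (simp only: power2_norm_eq_inner) (simp add: inner_add_left inner_add_right inner_commute)
  moreover have "(norm (b - a))\<^sup>2 = inner a a - 2 * inner a b + inner b b"
    by (simp only: power2_norm_eq_inner) (simp add: inner_diff_left inner_diff_right inner_commute)
  moreover have "(norm a)\<^sup>2 = inner a a" "(norm b)\<^sup>2 = inner b b" by (simp_all add: power2_norm_eq_inner)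
  ultimately show ?thesis by argo
qed

lemma prox_char:
  fixes v :: "'a::real_inner"
  assumes cD: "\<And>x w t. x \<in> D \<Longrightarrow> w \<in> D \<Longrightarrow> 0 \<le> t \<Longrightarrow> t \<le> 1 \<Longrightarrow> (1-t) *\<^sub>R x + t *\<^sub>R w \<in> D"
    and cH: "\<And>x w t. x \<in> D \<Longrightarrow> w \<in> D \<Longrightarrow> 0 \<le> t \<Longrightarrow> t \<le> 1 \<Longrightarrow> H ((1-t) *\<^sub>R x + t *\<^sub>R w) \<le> (1-t) * H x + t * H w"
    and ex: "\<exists>u\<in>D. \<forall>w\<in>D. H u + (norm (v - u))\<^sup>2 / 2 \<le> H w + (norm (v - w))\<^sup>2 / 2"
  shows "prox D H v \<in> D \<and> (\<forall>w\<in>D. 0 \<le> H w - H (prox D H v) + inner (prox D H v - v) (w - prox D H v))"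
proof -
  let ?P = "\<lambda>u. u \<in> D \<and> (\<forall>w\<in>D. H u + (norm (v - u))\<^sup>2 / 2 \<le> H w + (norm (v - w))\<^sup>2 / 2)"
  obtain u where u: "?P u" using ex by blast
  have uniq: "u2 = u" if u2: "?P u2" for u2
  proof (rule ccontr)
    assume ne: "u2 \<noteq> u"
    define m where "m = (1 - 1/2) *\<^sub>R u + (1/2) *\<^sub>R u2"
    have mD: "m \<in> D" using cD[of u u2 "1/2"] u u2 unfolding m_def by simp
    have Hm: "H m \<le> H u / 2 + H u2 / 2" using cH[of u u2 "1/2"] u u2 unfolding m_def by simp
    have e1: "H u + (norm (v - u))\<^sup>2 / 2 \<le> H u2 + (norm (v - u2))\<^sup>2 / 2" using u u2 by blast
    have e2: "H u2 + (norm (v - u2))\<^sup>2 / 2 \<le> H u + (norm (v - u))\<^sup>2 / 2" using u u2 by blast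
    have e3: "H u + (norm (v - u))\<^sup>2 / 2 \<le> H m + (norm (v - m))\<^sup>2 / 2" using u mD by blast
    have vm: "v - m = (1/2) *\<^sub>R (v - u) + (1/2) *\<^sub>R (v - u2)" 
    proof -
      have h: "(1/2) *\<^sub>R v + (1/2) *\<^sub>R v = v" by (simp flip: scaleR_add_left)
      show ?thesis unfolding m_def by (subst (1) h[symmetric]) (simp add: algebra_simps)
    qed
    have uu: "u - u2 = (v - u2) - (v - u)" by simp
    have par: "(norm (v - m))\<^sup>2 = (norm (v-u))\<^sup>2/2 + (norm (v-u2))\<^sup>2/2 - (norm (u - u2))\<^sup>2/4"
      unfolding vm uu by (rule par_id)
    have "0 < (norm (u - u2))\<^sup>2" using ne by simp
    then show False using e1 e2 e3 Hm par by linarith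
  qed
  have pe: "prox D H v = u"
    unfolding prox_def
  proof (rule the_equality)
    show "?P u" by (rule u)
  next
    fix u2 assume "?P u2" then show "u2 = u" by (rule uniq)
  qed
  have vi: "0 \<le> H w - H u + inner (u - v) (w - u)" if wD: "w \<in> D" for w
  proof (rule small_t[where b = "(norm (w - u))\<^sup>2 / 2"])
    fix t :: real assume t: "0 < t" "t \<le> 1"
    define ut where "ut = (1-t) *\<^sub>R u + t *\<^sub>R w"
    have utD: "ut \<in> D" using cD[of u w t] u wD t unfolding ut_def by simp
    have Hut: "H ut \<le> (1-t) * H u + t * H w" using cH[of u w t] u wD t unfolding ut_def by simp
    have mn: "H u + (norm (v - u))\<^sup>2 / 2 \<le> H ut + (norm (v - ut))\<^sup>2 / 2" using u utD by blast
    have "v - ut = (v - u) - t *\<^sub>R (w - u)" by (simp add: ut_def algebra_simps)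
    then have sq: "(norm (v - ut))\<^sup>2 = (norm (v-u))\<^sup>2 - 2 * t * inner (v - u) (w - u) + t\<^sup>2 * (norm (w - u))\<^sup>2"
      by (metis sq_expand)
    have ip: "inner (u - v) (w - u) = - inner (v - u) (w - u)" by (simp add: inner_diff_left)
    have Hut': "H ut \<le> H u - t * H u + t * H w" using Hut by (simp add: algebra_simps)
    have l1: "0 \<le> t * H w - t * H u - t * inner (v - u) (w - u) + t\<^sup>2 * (norm (w - u))\<^sup>2 / 2"
      using mn Hut' sq by linarith
    have "t * (H w - H u + inner (u - v) (w - u) + t * ((norm (w - u))\<^sup>2 / 2)) =
          t * H w - t * H u - t * inner (v - u) (w - u) + t\<^sup>2 * (norm (w - u))\<^sup>2 / 2"
      unfolding ip by (simp add: algebra_simps power2_eq_square)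
    then have "0 \<le> t * (H w - H u + inner (u - v) (w - u) + t * ((norm (w - u))\<^sup>2 / 2))"
      using l1 by linarith
    then show "0 \<le> H w - H u + inner (u - v) (w - u) + t * ((norm (w - u))\<^sup>2 / 2)"
      using t by (simp add: zero_le_mult_iff)
  qed
  show ?thesis unfolding pe using u vi by blast
qed



lemma sum_F_diff:
  fixes F :: "nat \<Rightarrow> 'x \<Rightarrow> real"
  assumes k: "k < K" and oth: "\<And>j. j \<noteq> k \<Longrightarrow> F j z1 = F j z0"
  shows "(\<Sum>j<K. F j z1) - (\<Sum>j<K. F j z0) = F k z1 - F k z0"
proof -
  have "(\<Sum>j<K. F j z1) - (\<Sum>j<K. F j z0) = (\<Sum>j<K. F j z1 - F j z0)"
    by (simp add: sum_subtractf)
  also have "\<dots> = F k z1 - F k z0"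
    using k oth by (subst sum.remove[of _ k]) auto
  finally show ?thesis .
qed

lemma block_vi:
  fixes blk :: "'n::finite \<Rightarrow> nat" and blkp :: "'p::finite \<Rightarrow> nat"
    and A :: "real^'n^'p" and E :: "real^'n^'m::finite" and q yv :: "real^'m"
    and g :: "nat \<Rightarrow> real^'p \<Rightarrow> real" and dg :: "nat \<Rightarrow> real^'p \<Rightarrow> real^'p"
    and h :: "nat \<Rightarrow> real^'n \<Rightarrow> real" and S :: "(real^'n) set"
    and a b w :: "real^'n" and \<rho> :: real
  assumes k: "k < K"
    and Sconv: "convex S" and hconv: "convex_on S (h k)"
    and Sa: "bproj blk k a \<in> S" and Sw: "bproj blk k w \<in> S"
    and minim: "\<And>u. bproj blk k u \<in> S \<Longrightarrow> aug_lag blk blkp K A g h E q \<rho> (gs_point blk k a a b) yv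
                     \<le> aug_lag blk blkp K A g h E q \<rho> (gs_point blk k a u b) yv"
    and gd: "(g k has_derivative (\<lambda>d. dg k (Ablk blk blkp A k a) \<bullet> d)) (at (Ablk blk blkp A k a))"
  shows "0 \<le> h k (bproj blk k w) - h k (bproj blk k a)
           + inner (AblkT blk blkp A k (dg k (Ablk blk blkp A k a)) - transpose E *v yv
                    + \<rho> *\<^sub>R (transpose E *v (E *v gs_point blk k a a b - q))) (bproj blk k (w - a))"
proof -
  define z0 where "z0 = gs_point blk k a a b"
  define d where "d = bproj blk k (w - a)"
  define a0 where "a0 = Ablk blk blkp A k a"
  define a1 where "a1 = Ablk blk blkp A k d"
  define c0 where "c0 = q - E *v z0"
  define ed where "ed = E *v d"
  define F where "F = (\<lambda>j z. g j (Ablk blk blkp A j z) + h j (bproj blk j z))"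
  define f where "f = (\<lambda>t::real. g k (a0 + t *\<^sub>R a1))"
  define hw where "hw = h k (bproj blk k w)"
  define ha where "ha = h k (bproj blk k a)"
  define C where "C = hw - ha - yv \<bullet> ed - \<rho> * (c0 \<bullet> ed)"
  define B where "B = \<rho> / 2 * (norm ed)\<^sup>2"
  define D where "D = dg k a0 \<bullet> a1"
  have al: "aug_lag blk blkp K A g h E q \<rho> z yv = (\<Sum>j<K. F j z) + yv \<bullet> (q - E *v z) + \<rho> / 2 * (norm (q - E *v z))\<^sup>2" for z
    unfolding aug_lag_def F_def by simp
  have bz0: "bproj blk k z0 = bproj blk k a" unfolding z0_def by (rule bproj_gs)
  have Az0: "Ablk blk blkp A k z0 = a0"
    unfolding a0_def by (metis Ablk_bproj bz0)
  have dd: "d = bproj blk k w - bproj blk k a" unfolding d_def by (rule bproj_diff)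
  have ineq: "0 \<le> C + (f t - f 0) / (t - 0) + t * B" if t: "0 < t" "t \<le> 1" for t
  proof -
    define ut where "ut = a + t *\<^sub>R (w - a)"
    have zt: "gs_point blk k a ut b = z0 + t *\<^sub>R d"
      unfolding z0_def d_def ut_def by (subst gs_lin) (simp add: bproj_scaleR)
    have but: "bproj blk k ut = (1 - t) *\<^sub>R bproj blk k a + t *\<^sub>R bproj blk k w"
      unfolding ut_def by (simp add: bproj_add bproj_scaleR bproj_diff algebra_simps)
    have utS: "bproj blk k ut \<in> S" unfolding but
      using Sconv Sa Sw t by (simp add: convexD)
    have hut: "h k (bproj blk k ut) \<le> (1 - t) * ha + t * hw"
      unfolding but ha_def hw_def using convex_onD[OF hconv, of t] Sa Sw t by simp
    have m: "aug_lag blk blkp K A g h E q \<rho> z0 yv \<le> aug_lag blk blkp K A g h E q \<rho> (z0 + t *\<^sub>R d) yv"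
      using minim[OF utS] unfolding zt z0_def .
    have oth: "F j (z0 + t *\<^sub>R d) = F j z0" if "j \<noteq> k" for j
    proof -
      have "bproj blk j (z0 + t *\<^sub>R d) = bproj blk j z0"
        using that unfolding d_def by (simp add: bproj_add bproj_scaleR bproj_bproj)
      then show ?thesis unfolding F_def by (metis Ablk_bproj)
    qed
    have Fd: "(\<Sum>j<K. F j (z0 + t *\<^sub>R d)) - (\<Sum>j<K. F j z0) = F k (z0 + t *\<^sub>R d) - F k z0"
      by (rule sum_F_diff[where F=F, OF k oth])
    have Fk1: "F k (z0 + t *\<^sub>R d) = f t + h k (bproj blk k ut)"
    proof -
      have "bproj blk k (z0 + t *\<^sub>R d) = bproj blk k ut" by (metis zt bproj_gs)
      moreover have "Ablk blk blkp A k (z0 + t *\<^sub>R d) = a0 + t *\<^sub>R a1"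
        unfolding a1_def by (simp add: Ablk_add Ablk_scaleR Az0)
      ultimately show ?thesis unfolding F_def f_def by simp
    qed
    have Fk0: "F k z0 = f 0 + ha"
      unfolding F_def f_def ha_def by (simp add: Az0 bz0)
    have qe: "q - E *v (z0 + t *\<^sub>R d) = c0 - t *\<^sub>R ed"
      unfolding c0_def ed_def by (simp add: matrix_vector_right_distrib matrix_vector_mult_scaleR)
    have sq: "(norm (c0 - t *\<^sub>R ed))\<^sup>2 = (norm c0)\<^sup>2 - 2 * t * inner c0 ed + t\<^sup>2 * (norm ed)\<^sup>2"
      by (rule sq_expand)
    have yl: "yv \<bullet> (c0 - t *\<^sub>R ed) = yv \<bullet> c0 - t * (yv \<bullet> ed)"
      by (simp add: inner_diff_right)
    have base: "0 \<le> (f t - f 0) + (h k (bproj blk k ut) - ha) - t * (yv \<bullet> ed)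
                  + \<rho> / 2 * (- 2 * t * inner c0 ed + t\<^sup>2 * (norm ed)\<^sup>2)"
    proof -
      have "0 \<le> aug_lag blk blkp K A g h E q \<rho> (z0 + t *\<^sub>R d) yv - aug_lag blk blkp K A g h E q \<rho> z0 yv"
        using m by simp
      also have "\<dots> = ((\<Sum>j<K. F j (z0 + t *\<^sub>R d)) - (\<Sum>j<K. F j z0))
            + (yv \<bullet> (c0 - t *\<^sub>R ed) - yv \<bullet> c0)
            + \<rho> / 2 * ((norm (c0 - t *\<^sub>R ed))\<^sup>2 - (norm c0)\<^sup>2)"
        unfolding al qe c0_def by (simp add: algebra_simps)
      also have "\<dots> = (f t - f 0) + (h k (bproj blk k ut) - ha) - t * (yv \<bullet> ed)
                  + \<rho> / 2 * (- 2 * t * inner c0 ed + t\<^sup>2 * (norm ed)\<^sup>2)"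
        unfolding Fd Fk1 Fk0 yl sq by simp
      finally show ?thesis .
    qed
    have "0 \<le> t * (C + (f t - f 0) / t + t * B)"
    proof -
      have e: "t * (C + (f t - f 0) / t + t * B) = t * C + (f t - f 0) + t\<^sup>2 * B"
        using t by (simp add: distrib_left power2_eq_square)
      have "t * C + t\<^sup>2 * B = t * hw - t * ha - t * (yv \<bullet> ed) + \<rho> / 2 * (- 2 * t * inner c0 ed + t\<^sup>2 * (norm ed)\<^sup>2)"
        unfolding C_def B_def by (simp add: algebra_simps)
      moreover have "h k (bproj blk k ut) - ha \<le> t * hw - t * ha"
        using hut by (simp add: algebra_simps)
      ultimately show ?thesis unfolding e using base by linarith
    qed
    then show ?thesis using t by (simp add: zero_le_mult_iff)
  qed
  have lim: "((\<lambda>t. C + (f t - f 0) / (t - 0) + t * B) \<longlongrightarrow> C + D + 0 * B) (at_right 0)"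
  proof -
    have l1: "((\<lambda>t::real. a0 + t *\<^sub>R a1) has_derivative (\<lambda>t. t *\<^sub>R a1)) (at 0 within {0<..})"
      by (auto intro!: derivative_eq_intros)
    have gd': "(g k has_derivative (\<lambda>d. dg k a0 \<bullet> d)) (at ((\<lambda>t::real. a0 + t *\<^sub>R a1) 0))"
      using gd unfolding a0_def by simp
    have "(f has_derivative (\<lambda>t. dg k a0 \<bullet> (t *\<^sub>R a1))) (at 0 within {0<..})"
      unfolding f_def by (rule has_derivative_compose[OF l1 gd'])
    moreover have "(\<lambda>t. dg k a0 \<bullet> (t *\<^sub>R a1)) = (*) D"
      unfolding D_def by (auto simp: fun_eq_iff)
    ultimately have "(f has_field_derivative D) (at 0 within {0<..})"
      by (simp add: has_field_derivative_def)
    then have "((\<lambda>t. (f t - f 0) / (t - 0)) \<longlongrightarrow> D) (at_right 0)"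
      by (simp add: has_field_derivative_iff)
    then show ?thesis by (intro tendsto_intros)
  qed
  have ev: "eventually (\<lambda>t. 0 \<le> C + (f t - f 0) / (t - 0) + t * B) (at_right (0::real))"
  proof -
    have "eventually (\<lambda>t. t \<in> {0<..<(1::real)}) (at_right 0)" by (rule eventually_at_right_real) simp
    then show ?thesis by (rule eventually_mono) (use ineq in force)
  qed
  have "0 \<le> C + D + 0 * B"
    by (rule tendsto_lowerbound[OF lim ev]) simp
  then have main: "0 \<le> hw - ha - yv \<bullet> ed - \<rho> * (c0 \<bullet> ed) + D"
    unfolding C_def by simp
  have D': "D = AblkT blk blkp A k (dg k a0) \<bullet> d"
    unfolding D_def a1_def by (rule inner_Ablk)
  have y': "yv \<bullet> ed = (transpose E *v yv) \<bullet> d"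
    unfolding ed_def by (simp only: inner_transpose)
  have c': "c0 \<bullet> ed = (transpose E *v c0) \<bullet> d"
    unfolding ed_def by (simp only: inner_transpose)
  have c0': "transpose E *v (E *v z0 - q) = - (transpose E *v c0)"
    unfolding c0_def by (simp add: matrix_vector_mult_diff_distrib)
  show ?thesis
    using main unfolding D' y' c' hw_def ha_def
    by (simp del: transpose_matrix_vector add: z0_def[symmetric] a0_def[symmetric] d_def[symmetric] c0' inner_diff_left inner_add_left)
qed



lemma norm_le_from_inner:
  fixes e c :: "'a::real_inner"
  assumes "inner e e \<le> inner c e"
  shows "norm e \<le> norm c"
proof (cases "e = 0")
  case True then show ?thesis by simp
next
  case False
  have "(norm e)\<^sup>2 \<le> norm c * norm e"
    using assms norm_cauchy_schwarz[of c e] by (simp add: power2_norm_eq_inner)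
  then have "norm e * norm e \<le> norm c * norm e" by (simp add: power2_eq_square)
  then show ?thesis using False by simp
qed

lemma sum_bproj_AblkT:
  "(\<Sum>k<K. bproj blk k (AblkT blk blkp A k (u k))) = (\<Sum>k<K. AblkT blk blkp A k (u k))"
  by (simp add: AblkT_def bproj_bproj)

lemma sum_bproj_gen:
  assumes "\<forall>i. blk i < K"
  shows "(\<Sum>k<K. bproj blk k (AblkT blk blkp A k (u k) - c + \<rho> *\<^sub>R c')) = (\<Sum>k<K. AblkT blk blkp A k (u k)) - c + \<rho> *\<^sub>R c'"
proof -
  have "(\<Sum>k<K. bproj blk k (AblkT blk blkp A k (u k) - c + \<rho> *\<^sub>R c'))
      = (\<Sum>k<K. bproj blk k (AblkT blk blkp A k (u k))) - (\<Sum>k<K. bproj blk k c) + \<rho> *\<^sub>R (\<Sum>k<K. bproj blk k c')"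
    by (simp add: bproj_add bproj_diff bproj_scaleR sum.distrib sum_subtractf scaleR_sum_right)
  then show ?thesis using sum_bproj[OF assms] sum_bproj_AblkT by simp
qed

theorem lemma2p5:
  fixes blk :: "'n::finite \<Rightarrow> nat" and blkp :: "'p::finite \<Rightarrow> nat" and K :: nat
    and A :: "real^'n^'p" and E :: "real^'n^'m::finite" and q :: "real^'m"
    and g :: "nat \<Rightarrow> real^'p \<Rightarrow> real" and dg :: "nat \<Rightarrow> real^'p \<Rightarrow> real^'p"
    and Dg :: "nat \<Rightarrow> (real^'p) set"
    and h :: "nat \<Rightarrow> real^'n \<Rightarrow> real" and Dh :: "nat \<Rightarrow> (real^'n) set"
    and X :: "nat \<Rightarrow> (real^'n) set"
    and \<rho> \<alpha> L :: real
  assumes blocks: "\<forall>i. blk i < K"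
    and rho_pos: "\<rho> > 0" and alpha_pos: "\<alpha> > 0" and L_pos: "L > 0"
    \<comment> \<open>X_k: convex constraint set in the block-k subspace\<close>
    and X_blk: "\<forall>k<K. \<forall>x\<in>X k. bproj blk k x = x"
    and X_convex: "\<forall>k<K. convex (X k)"
    \<comment> \<open>A(b): h_k convex and continuous on its (block-k) domain\<close>
    and Dh_blk: "\<forall>k<K. \<forall>x\<in>Dh k. bproj blk k x = x"
    and h_convex: "\<forall>k<K. convex (Dh k) \<and> convex_on (Dh k) (h k)"
    and h_cont: "\<forall>k<K. continuous_on (Dh k) (h k)"
    \<comment> \<open>prox_h (h with the constraints absorbed) is well defined\<close>
    and prox_exists: "\<forall>v. \<exists>u\<in>hdom blk K Dh X. \<forall>w\<in>hdom blk K Dh X.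
        hsum blk K h u + (norm (v - u))\<^sup>2 / 2 \<le> hsum blk K h w + (norm (v - w))\<^sup>2 / 2"
    \<comment> \<open>g_k is a function of the block-k coordinates of real^'p (cylinder representation)\<close>
    and g_blk: "\<forall>k<K. \<forall>z. g k z = g k (bproj blkp k z)"
    and Dg_blk: "\<forall>k<K. \<forall>z. z \<in> Dg k \<longleftrightarrow> bproj blkp k z \<in> Dg k"
    \<comment> \<open>A(b): g_k convex and continuous on its domain\<close>
    and g_convex: "\<forall>k<K. convex (Dg k) \<and> convex_on (Dg k) (g k)"
    and g_cont: "\<forall>k<K. continuous_on (Dg k) (g k)"
    \<comment> \<open>A(c): strictly convex, continuously differentiable on the interior of its domain\<close>
    and g_strict: "\<forall>k<K. strictly_convex_on (Dg k \<inter> range (bproj blkp k)) (g k)"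
    and g_deriv: "\<forall>k<K. \<forall>z\<in>interior (Dg k). (g k has_derivative (\<lambda>d. dg k z \<bullet> d)) (at z)"
    and dg_cont: "\<forall>k<K. continuous_on (interior (Dg k)) (dg k)"
    \<comment> \<open>gradients in the Lipschitz condition exist on X_k\<close>
    and AX_int: "\<forall>k<K. \<forall>x. bproj blk k x \<in> X k \<longrightarrow> Ablk blk blkp A k x \<in> interior (Dg k)"
    \<comment> \<open>A(c): Lipschitz condition\<close>
    and lipschitz: "\<forall>k<K. \<forall>x x'. bproj blk k x \<in> X k \<longrightarrow> bproj blk k x' \<in> X k \<longrightarrow>
        norm (AblkT blk blkp A k (dg k (Ablk blk blkp A k x))
              - AblkT blk blkp A k (dg k (Ablk blk blkp A k x')))
        \<le> L * norm (bproj blk k x - bproj blk k x')"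
  shows "\<exists>\<sigma>>0. \<forall>x y. admm_seq blk blkp K A g h Dh X E q \<rho> \<alpha> x y \<longrightarrow>
           (\<forall>r\<ge>1. norm (prox_grad blk blkp K A dg h Dh X E q \<rho> (x r) (y r))
                    \<le> \<sigma> * norm (x (Suc r) - x r))"
proof -
  obtain B0 where B0: "B0 > 0" "\<And>w. norm ((transpose E ** E) *v w) \<le> B0 * norm w"
    using linear_bounded_pos[OF matrix_vector_mul_linear[of "transpose E ** E"]] by blast
  define \<sigma> where "\<sigma> = 2 + real K * L + real K * \<rho> * B0"
  have \<sigma>pos: "\<sigma> > 0" unfolding \<sigma>_def using L_pos rho_pos B0 by (simp add: add_pos_nonneg)
  define S where "S = (\<lambda>k. Dh k \<inter> X k)"
  have Sconv: "convex (S k)" if "k < K" for k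
    unfolding S_def using h_convex X_convex that by (simp add: convex_Int)
  have hconv: "convex_on (S k) (h k)" if "k < K" for k
    using h_convex that Sconv[OF that] unfolding S_def by (meson convex_on_subset inf_le1)
  let ?D = "hdom blk K Dh X" and ?H = "hsum blk K h"
  have Dmem: "z \<in> ?D \<longleftrightarrow> (\<forall>k<K. bproj blk k z \<in> S k)" for z
    unfolding hdom_def S_def by simp
  have bcomb: "bproj blk k ((1-t) *\<^sub>R a + t *\<^sub>R b) = (1-t) *\<^sub>R bproj blk k a + t *\<^sub>R bproj blk k b" for k t a b
    by (simp add: bproj_add bproj_scaleR)
  have cD: "(1-t) *\<^sub>R a + t *\<^sub>R b \<in> ?D" if "a \<in> ?D" "b \<in> ?D" "0 \<le> t" "t \<le> 1" for a b t
    using that Sconv unfolding Dmem bcomb by (simp add: convexD)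
  have cH: "?H ((1-t) *\<^sub>R a + t *\<^sub>R b) \<le> (1-t) * ?H a + t * ?H b"
    if "a \<in> ?D" "b \<in> ?D" "0 \<le> t" "t \<le> 1" for a b t
  proof -
    have "?H ((1-t) *\<^sub>R a + t *\<^sub>R b) = (\<Sum>k<K. h k ((1-t) *\<^sub>R bproj blk k a + t *\<^sub>R bproj blk k b))"
      unfolding hsum_def bcomb ..
    also have "\<dots> \<le> (\<Sum>k<K. (1-t) * h k (bproj blk k a) + t * h k (bproj blk k b))"
      using that hconv unfolding Dmem by (intro sum_mono) (metis convex_onD lessThan_iff)
    also have "\<dots> = (1-t) * ?H a + t * ?H b"
      unfolding hsum_def by (simp add: sum.distrib sum_distrib_left)
    finally show ?thesis .
  qed
  show ?thesis
  proof (intro exI[of _ \<sigma>] conjI \<sigma>pos allI impI)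
    fix x :: "nat \<Rightarrow> real^'n" and y :: "nat \<Rightarrow> real^'m" and r :: nat
    assume adm: "admm_seq blk blkp K A g h Dh X E q \<rho> \<alpha> x y" and r: "1 \<le> r"
    define xp where "xp = x (Suc r)"
    define xc where "xc = x r"
    define yc where "yc = y r"
    have xpS: "bproj blk k xp \<in> S k" if "k < K" for k
      using adm that unfolding admm_seq_def xp_def S_def by blast
    have xcS: "bproj blk k xc \<in> S k" if "k < K" for k
    proof -
      have "x r = x (Suc (r - 1))" using r by simp
      then show ?thesis using adm that unfolding admm_seq_def xc_def S_def by metis
    qed
    have xpD: "xp \<in> ?D" using xpS Dmem by blast
    define v where "v = xc - gradg blk blkp K A dg xc + transpose E *v yc - \<rho> *\<^sub>R (transpose E *v (E *v xc - q))"
    define p where "p = prox ?D ?H v"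
    have pc: "p \<in> ?D \<and> (\<forall>w\<in>?D. 0 \<le> ?H w - ?H p + inner (p - v) (w - p))"
      unfolding p_def by (rule prox_char) (use cD cH prox_exists in blast)+
    have pD: "p \<in> ?D" using pc by blast
    have vi1: "0 \<le> ?H xp - ?H p + inner (p - v) (xp - p)" using pc xpD by blast
    define zk where "zk = (\<lambda>k. gs_point blk k xp xp xc)"
    define Gk where "Gk = (\<lambda>k. AblkT blk blkp A k (dg k (Ablk blk blkp A k xp)) - transpose E *v yc
                    + \<rho> *\<^sub>R (transpose E *v (E *v zk k - q)))"
    have bvi: "0 \<le> h k (bproj blk k p) - h k (bproj blk k xp) + inner (Gk k) (bproj blk k (p - xp))"
      if k: "k < K" for k
      unfolding Gk_def zk_def
    proof (rule block_vi[where h=h and S="S k" and K=K and blk=blk and a=xp and w=p and b=xc and yv=yc and g=g and dg=dg and A=A and blkp=blkp and E=E and q=q and \<rho>=\<rho>])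
      show "k < K" by (rule k)
      show "convex (S k)" by (rule Sconv[OF k])
      show "convex_on (S k) (h k)" by (rule hconv[OF k])
      show "bproj blk k xp \<in> S k" by (rule xpS[OF k])
      show "bproj blk k p \<in> S k" using pD k Dmem by blast
      show "aug_lag blk blkp K A g h E q \<rho> (gs_point blk k xp xp xc) yc
            \<le> aug_lag blk blkp K A g h E q \<rho> (gs_point blk k xp u xc) yc" if "bproj blk k u \<in> S k" for u
        using adm k that unfolding admm_seq_def xp_def xc_def yc_def S_def by blast
      have "Ablk blk blkp A k xp \<in> interior (Dg k)" using AX_int k xpS[OF k] unfolding S_def by blast
      then show "(g k has_derivative (\<lambda>d. dg k (Ablk blk blkp A k xp) \<bullet> d)) (at (Ablk blk blkp A k xp))"
        using g_deriv k by blast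
    qed
    define G where "G = (\<Sum>k<K. bproj blk k (Gk k))"
    have sumvi: "0 \<le> ?H p - ?H xp + inner G (p - xp)"
    proof -
      have "0 \<le> (\<Sum>k<K. h k (bproj blk k p) - h k (bproj blk k xp) + inner (Gk k) (bproj blk k (p - xp)))"
        using bvi by (intro sum_nonneg) auto
      also have "\<dots> = ?H p - ?H xp + inner G (p - xp)"
        unfolding hsum_def G_def by (simp add: sum.distrib sum_subtractf inner_sum_left inner_bproj)
      finally show ?thesis .
    qed
    define e where "e = p - xp"
    define c where "c = G + v - xp"
    have "inner e e \<le> inner c e"
    proof -
      have "inner G e + inner (p - v) (xp - p) = inner c e - inner e e"
        unfolding c_def e_def by (simp add: inner_diff_left inner_diff_right inner_add_left inner_add_right inner_commute)
      then show ?thesis using sumvi vi1 unfolding e_def by linarith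
    qed
    then have ne: "norm e \<le> norm c" by (rule norm_le_from_inner)
    define V where "V = (\<lambda>k. AblkT blk blkp A k (dg k (Ablk blk blkp A k xc)) - transpose E *v yc
                    + \<rho> *\<^sub>R (transpose E *v (E *v xc - q)))"
    have sumV: "(\<Sum>k<K. bproj blk k (V k)) = gradg blk blkp K A dg xc - transpose E *v yc + \<rho> *\<^sub>R (transpose E *v (E *v xc - q))"
      unfolding V_def gradg_def by (rule sum_bproj_gen[OF blocks])
    have ceq: "c = (xc - xp) + (\<Sum>k<K. bproj blk k (Gk k - V k))"
      unfolding c_def G_def v_def by (simp add: bproj_diff sum_subtractf sumV algebra_simps)
    have Wb: "norm (bproj blk k (Gk k - V k)) \<le> (L + \<rho> * B0) * norm (xp - xc)" if k: "k < K" for k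
    proof -
      have "Gk k - V k = (AblkT blk blkp A k (dg k (Ablk blk blkp A k xp)) - AblkT blk blkp A k (dg k (Ablk blk blkp A k xc)))
                 + \<rho> *\<^sub>R ((transpose E ** E) *v (zk k - xc))"
        unfolding Gk_def V_def
        by (simp del: transpose_matrix_vector add: matrix_vector_mul_assoc[symmetric] matrix_vector_mult_diff_distrib algebra_simps)
      then have "norm (Gk k - V k) \<le> norm (AblkT blk blkp A k (dg k (Ablk blk blkp A k xp)) - AblkT blk blkp A k (dg k (Ablk blk blkp A k xc)))
                 + \<rho> * norm ((transpose E ** E) *v (zk k - xc))"
        using rho_pos by (metis norm_triangle_ineq norm_scaleR abs_of_pos)
      also have "\<dots> \<le> L * norm (xp - xc) + \<rho> * (B0 * norm (xp - xc))"
      proof (rule add_mono)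
        have "norm (AblkT blk blkp A k (dg k (Ablk blk blkp A k xp)) - AblkT blk blkp A k (dg k (Ablk blk blkp A k xc)))
              \<le> L * norm (bproj blk k xp - bproj blk k xc)"
          using lipschitz k xpS[OF k] xcS[OF k] unfolding S_def by blast
        also have "\<dots> \<le> L * norm (xp - xc)"
          using L_pos norm_bproj_le[of blk k "xp - xc"] by (simp add: bproj_diff)
        finally show "norm (AblkT blk blkp A k (dg k (Ablk blk blkp A k xp)) - AblkT blk blkp A k (dg k (Ablk blk blkp A k xc)))
              \<le> L * norm (xp - xc)" .
        have "norm ((transpose E ** E) *v (zk k - xc)) \<le> B0 * norm (zk k - xc)" by (rule B0(2))
        also have "\<dots> \<le> B0 * norm (xp - xc)"
          using B0(1) norm_gs_le[of blk k xp xc] unfolding zk_def by simp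
        finally show "\<rho> * norm ((transpose E ** E) *v (zk k - xc)) \<le> \<rho> * (B0 * norm (xp - xc))"
          using rho_pos by simp
      qed
      finally have "norm (Gk k - V k) \<le> (L + \<rho> * B0) * norm (xp - xc)" by (simp add: algebra_simps)
      then show ?thesis using norm_bproj_le[of blk k "Gk k - V k"] by linarith
    qed
    have "norm (\<Sum>k<K. bproj blk k (Gk k - V k)) \<le> (\<Sum>k<K. norm (bproj blk k (Gk k - V k)))"
      by (rule norm_sum)
    also have "\<dots> \<le> real (card {..<K}) * ((L + \<rho> * B0) * norm (xp - xc))"
      by (rule sum_bounded_above) (use Wb in auto)
    finally have sb: "norm (\<Sum>k<K. bproj blk k (Gk k - V k)) \<le> real K * ((L + \<rho> * B0) * norm (xp - xc))" by simp
    have nc: "norm c \<le> norm (xp - xc) + real K * ((L + \<rho> * B0) * norm (xp - xc))"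
    proof -
      have "norm (xc - xp + (\<Sum>k<K. bproj blk k (Gk k - V k))) \<le> norm (xc - xp) + norm (\<Sum>k<K. bproj blk k (Gk k - V k))"
        by (rule norm_triangle_ineq)
      then show ?thesis unfolding ceq using sb norm_minus_commute[of xc xp] by linarith
    qed
    have pg: "prox_grad blk blkp K A dg h Dh X E q \<rho> (x r) (y r) = (xc - xp) - e"
      unfolding prox_grad_def xc_def[symmetric] yc_def[symmetric] v_def[symmetric] p_def[symmetric] e_def by simp
    have "norm ((xc - xp) - e) \<le> norm (xp - xc) + norm e"
      by (metis norm_minus_commute norm_triangle_ineq4)
    also have "\<dots> \<le> \<sigma> * norm (xp - xc)"
      using ne nc unfolding \<sigma>_def by (simp add: algebra_simps)
    finally show "norm (prox_grad blk blkp K A dg h Dh X E q \<rho> (x r) (y r)) \<le> \<sigma> * norm (x (Suc r) - x r)"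
      unfolding pg xp_def xc_def .
  qed
qed


end
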